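(* Let $K$ be a field, $G=\mathbb Z$, $\widehat G=2\mathbb Z$. If $t\in\mathbb Z$ is even, every $2\mathbb Z$-periodic Leibniz algebra $L(f,t)$ is isomorphic to one of $L_{\bar 0 1}(\alpha,t)$ ($\alpha\in\{0,1\}$), $L_{\bar 0 2}(t)$, $L_{\bar 0 3}(t)$. If $t$ is odd, every $2\mathbb Z$-periodic Leibniz algebra $L(f,t)$ is isomorphic to one of $L_{\bar 1 1}(\alpha,t)$ ($\alpha\in\{0,1\}$), $L_{\bar 1 2}(t)$, $L_{\bar 1 3}(t)$.
   Context: For $t\in\mathbb Z$ and $f:\mathbb Z\times\mathbb Z\to K$, $L(f,t)$ is the $K$-algebra with basis $\{e_a:a\in\mathbb Z\}$ and multiplication $e_ae_b=f(a,b)e_{a+b+t}$; it is $2\mathbb Z$-periodic if $f(a,b)$ depends only on the parities of $a$ and $b$, and a Leibniz algebra if $x(yz)=(xy)z-(xz)y$ for all $x,y,z$. The following algebras are of the form $L(f,t)$ with $f$ given by: $L_{\bar 0 1}(\alpha,t)$: $f(a,b)=\alpha$ if $a$ odd and $b$ even, $0$ otherwise (i.e. $e_{2k-1}e_{2m}=\alpha e_{2(k+m)-1+t}$); $L_{\bar 0 2}(t)$ and $L_{\bar 1 2}(t)$: $f(a,b)=-1$ if $a$ even and $b$ odd, $f(a,b)=1$ if $a$ odd and $b$ even, $0$ otherwise; $L_{\bar 0 3}(t)$: $f(a,b)=1$ if $a,b$ both odd, $0$ otherwise; $L_{\bar 1 1}(\alpha,t)$: $f(a,b)=\alpha$ if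 $a$ even and $b$ odd, $0$ otherwise; $L_{\bar 1 3}(t)$: $f(a,b)=1$ if $a,b$ both even, $0$ otherwise. *)

theory Defs
  imports Main
begin

text \<open>Elements of L(f,t): finitely supported K-valued functions on the index set Z,
  i.e. finite linear combinations of the basis vectors e_a.\<close>
definition fsupp :: "(int \<Rightarrow> 'k::zero) set" where
  "fsupp = {x. finite {a. x a \<noteq> 0}}"

text \<open>Bilinear extension of e_a e_b = f(a,b) e_(a+b+t).\<close>
definition Lmult :: "(int \<Rightarrow> int \<Rightarrow> 'k::comm_ring_1) \<Rightarrow> int \<Rightarrow> (int \<Rightarrow> 'k) \<Rightarrow> (int \<Rightarrow> 'k) \<Rightarrow> (int \<Rightarrow> 'k)" where
  "Lmult f t x y = (\<lambda>c. \<Sum>a\<in>{a. x a \<noteq> 0}. f a (c - a - t) * x a * y (c - a - t))"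

definition is_leibniz :: "(int \<Rightarrow> int \<Rightarrow> 'k::comm_ring_1) \<Rightarrow> int \<Rightarrow> bool" where
  "is_leibniz f t = (\<forall>x\<in>fsupp. \<forall>y\<in>fsupp. \<forall>z\<in>fsupp.
     Lmult f t x (Lmult f t y z) = (\<lambda>c. Lmult f t (Lmult f t x y) z c - Lmult f t (Lmult f t x z) y c))"

definition periodic2 :: "(int \<Rightarrow> int \<Rightarrow> 'k) \<Rightarrow> bool" where
  "periodic2 f = (\<forall>a b a' b'. even (a - a') \<longrightarrow> even (b - b') \<longrightarrow> f a b = f a' b')"

definition alg_iso :: "(int \<Rightarrow> int \<Rightarrow> 'k::comm_ring_1) \<Rightarrow> int \<Rightarrow> (int \<Rightarrow> int \<Rightarrow> 'k) \<Rightarrow> int \<Rightarrow> bool" where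
  "alg_iso f t g s = (\<exists>\<phi>. bij_betw \<phi> fsupp fsupp
     \<and> (\<forall>x\<in>fsupp. \<forall>y\<in>fsupp. \<phi> (\<lambda>a. x a + y a) = (\<lambda>a. \<phi> x a + \<phi> y a))
     \<and> (\<forall>c. \<forall>x\<in>fsupp. \<phi> (\<lambda>a. c * x a) = (\<lambda>a. c * \<phi> x a))
     \<and> (\<forall>x\<in>fsupp. \<forall>y\<in>fsupp. \<phi> (Lmult f t x y) = Lmult g s (\<phi> x) (\<phi> y)))"

definition fA1 :: "'k::comm_ring_1 \<Rightarrow> int \<Rightarrow> int \<Rightarrow> 'k" where
  "fA1 \<alpha> a b = (if odd a \<and> even b then \<alpha> else 0)"

definition fA2 :: "int \<Rightarrow> int \<Rightarrow> 'k::comm_ring_1" where   (* L_{0 2}(t) and L_{1 2}(t) *)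
  "fA2 a b = (if even a \<and> odd b then -1 else if odd a \<and> even b then 1 else 0)"

definition fA3 :: "int \<Rightarrow> int \<Rightarrow> 'k::comm_ring_1" where
  "fA3 a b = (if odd a \<and> odd b then 1 else 0)"

definition fB1 :: "'k::comm_ring_1 \<Rightarrow> int \<Rightarrow> int \<Rightarrow> 'k" where
  "fB1 \<alpha> a b = (if even a \<and> odd b then \<alpha> else 0)"

definition fB3 :: "int \<Rightarrow> int \<Rightarrow> 'k::comm_ring_1" where
  "fB3 a b = (if even a \<and> even b then 1 else 0)"

end

theory Submission
  imports Defs
begin

definition dl :: "int \<Rightarrow> 'k::comm_ring_1 \<Rightarrow> int \<Rightarrow> 'k" where
  "dl d k = (\<lambda>x. if x = d then k else 0)"

lemma dl_fsupp: "dl d k \<in> fsupp"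
proof -
  have "{a. dl d k a \<noteq> 0} \<subseteq> {d}" by (auto simp: dl_def)
  then show ?thesis unfolding fsupp_def by (auto intro: finite_subset)
qed

lemma Lmult_dl: "Lmult f t (dl d k) y = (\<lambda>c. f d (c-d-t) * k * y (c-d-t))"
proof (cases "k = 0")
  case True
  then show ?thesis by (simp add: Lmult_def dl_def)
next
  case False
  then have "{a. dl d k a \<noteq> 0} = {d}" by (auto simp: dl_def)
  then show ?thesis by (simp add: Lmult_def dl_def)
qed

lemma Lmult_dl_dl: "Lmult f t (dl d k) (dl e m) = dl (d+e+t) (f d e * k * m)"
  unfolding Lmult_dl by (rule ext) (auto simp: dl_def)

lemma leib_eq:
  assumes "is_leibniz f t"
  shows "f b c * f a (b+c+t) = f a b * f (a+b+t) c - f a c * f (a+c+t) b"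
proof -
  have "Lmult f t (dl a 1) (Lmult f t (dl b 1) (dl c 1)) =
     (\<lambda>w. Lmult f t (Lmult f t (dl a 1) (dl b 1)) (dl c 1) w - Lmult f t (Lmult f t (dl a 1) (dl c 1)) (dl b 1) w)"
    using assms unfolding is_leibniz_def by (simp add: dl_fsupp)
  then have "Lmult f t (dl a 1) (Lmult f t (dl b 1) (dl c 1)) (a+b+c+2*t) =
     Lmult f t (Lmult f t (dl a 1) (dl b 1)) (dl c 1) (a+b+c+2*t) - Lmult f t (Lmult f t (dl a 1) (dl c 1)) (dl b 1) (a+b+c+2*t)"
    by meson
  then show ?thesis unfolding Lmult_dl_dl by (simp add: dl_def algebra_simps)
qed

lemma fper:
  assumes "periodic2 f"
  shows "f a b = (if even a then (if even b then f 0 0 else f 0 1) else (if even b then f 1 0 else f 1 1))"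
proof -
  have P: "\<And>a b a' b'. even (a - a') \<Longrightarrow> even (b - b') \<Longrightarrow> f a b = f a' b'"
    using assms unfolding periodic2_def by blast
  show ?thesis
  proof (cases "even a"; cases "even b")
    assume "even a" "even b" then show ?thesis using P[of a 0 b 0] by simp
  next
    assume "even a" "odd b" then show ?thesis using P[of a 0 b 1] by simp
  next
    assume "odd a" "even b" then show ?thesis using P[of a 1 b 0] by simp
  next
    assume "odd a" "odd b" then show ?thesis using P[of a 1 b 1] by simp
  qed
qed

lemma supp_scale:
  fixes s :: "int \<Rightarrow> 'k::field"
  assumes "\<forall>a. s a \<noteq> 0"
  shows "{a. s a * x a \<noteq> 0} = {a. x a \<noteq> 0}"
  using assms by auto

lemma iso_diag:
  fixes s :: "int \<Rightarrow> 'k::field"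
  assumes s0: "\<forall>a. s a \<noteq> 0"
    and sf: "\<forall>a b. s (a+b+t) * f a b = g a b * s a * s b"
  shows "alg_iso f t g t"
  unfolding alg_iso_def
proof (intro exI[of _ "\<lambda>x a. s a * x a"] conjI ballI allI)
  show "bij_betw (\<lambda>x a. s a * x a) fsupp fsupp"
  proof (rule bij_betw_byWitness[where f' = "\<lambda>x a. x a / s a"])
    show "(\<lambda>x a. s a * x a) ` fsupp \<subseteq> fsupp"
      using supp_scale[OF s0] by (auto simp: fsupp_def)
    have "{a. x a / s a \<noteq> 0} = {a. x a \<noteq> 0}" for x :: "int \<Rightarrow> 'k"
      using s0 by auto
    then show "(\<lambda>x a. x a / s a) ` fsupp \<subseteq> fsupp"
      by (auto simp: fsupp_def)
    show "\<forall>x\<in>fsupp. (\<lambda>a. s a * x a / s a) = x" using s0 by auto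
    show "\<forall>x\<in>fsupp. (\<lambda>a. s a * (x a / s a)) = x" using s0 by auto
  qed
next
  fix x y :: "int \<Rightarrow> 'k"
  show "(\<lambda>a. s a * (x a + y a)) = (\<lambda>a. s a * x a + s a * y a)"
    by (simp add: algebra_simps)
next
  fix x :: "int \<Rightarrow> 'k" and c
  show "(\<lambda>a. s a * (c * x a)) = (\<lambda>a. c * (s a * x a))"
    by (simp add: algebra_simps)
next
  fix x y :: "int \<Rightarrow> 'k"
  show "(\<lambda>a. s a * Lmult f t x y a) = Lmult g t (\<lambda>a. s a * x a) (\<lambda>a. s a * y a)"
  proof (rule ext)
    fix c
    have "s c * Lmult f t x y c = (\<Sum>a\<in>{a. x a \<noteq> 0}. s c * (f a (c - a - t) * x a * y (c - a - t)))"
      unfolding Lmult_def by (simp add: sum_distrib_left)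
    also have "\<dots> = (\<Sum>a\<in>{a. x a \<noteq> 0}. g a (c - a - t) * (s a * x a) * (s (c - a - t) * y (c - a - t)))"
    proof (rule sum.cong)
      fix a
      have "s (a + (c-a-t) + t) * f a (c-a-t) = g a (c-a-t) * s a * s (c-a-t)" using sf by blast
      then have e: "s c * f a (c-a-t) = g a (c-a-t) * s a * s (c-a-t)" by simp
      have "s c * (f a (c - a - t) * x a * y (c - a - t)) = (s c * f a (c-a-t)) * x a * y (c - a - t)"
        by (simp only: mult.assoc)
      also have "\<dots> = (g a (c-a-t) * s a * s (c-a-t)) * x a * y (c - a - t)" by (simp only: e)
      also have "\<dots> = g a (c - a - t) * (s a * x a) * (s (c - a - t) * y (c - a - t))"
        by (simp only: ac_simps)
      finally show "s c * (f a (c - a - t) * x a * y (c - a - t)) = g a (c - a - t) * (s a * x a) * (s (c - a - t) * y (c - a - t))" .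
    qed simp
    also have "\<dots> = Lmult g t (\<lambda>a. s a * x a) (\<lambda>a. s a * y a) c"
      unfolding Lmult_def supp_scale[OF s0] ..
    finally show "s c * Lmult f t x y c = Lmult g t (\<lambda>a. s a * x a) (\<lambda>a. s a * y a) c" .
  qed
qed

lemma iso_par:
  fixes f g :: "int \<Rightarrow> int \<Rightarrow> 'k::field"
  assumes "lz \<noteq> 0" "lo \<noteq> 0"
    and "\<And>a b. even a \<Longrightarrow> even b \<Longrightarrow> (if even (a+b+t) then lz else lo) * f a b = g a b * lz * lz"
    and "\<And>a b. even a \<Longrightarrow> odd b \<Longrightarrow> (if even (a+b+t) then lz else lo) * f a b = g a b * lz * lo"
    and "\<And>a b. odd a \<Longrightarrow> even b \<Longrightarrow> (if even (a+b+t) then lz else lo) * f a b = g a b * lo * lz"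
    and "\<And>a b. odd a \<Longrightarrow> odd b \<Longrightarrow> (if even (a+b+t) then lz else lo) * f a b = g a b * lo * lo"
  shows "alg_iso f t g t"
proof (rule iso_diag[where s = "\<lambda>a. if even a then lz else lo"])
  show "\<forall>a. (if even a then lz else lo) \<noteq> 0" using assms(1,2) by simp
  show "\<forall>a b. (if even (a+b+t) then lz else lo) * f a b = g a b * (if even a then lz else lo) * (if even b then lz else lo)"
  proof (intro allI)
    fix a b
    show "(if even (a+b+t) then lz else lo) * f a b = g a b * (if even a then lz else lo) * (if even b then lz else lo)"
    proof (cases "even a"; cases "even b")
      assume "even a" "even b" then show ?thesis using assms(3)[of a b] by simp
    next
      assume "even a" "odd b" then show ?thesis using assms(4)[of a b] by simp
    next
      assume "odd a" "even b" then show ?thesis using assms(5)[of a b] by simp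
    next
      assume "odd a" "odd b" then show ?thesis using assms(6)[of a b] by simp
    qed
  qed
qed

lemma T1:
  fixes f :: "int \<Rightarrow> int \<Rightarrow> 'k::field" and t :: int
  assumes Fa: "\<And>a b. f a b = (if even a then (if even b then A else B) else (if even b then C else D))"
  and "D \<noteq> 0" and "A = 0" and "B = 0" and "C = 0" and "even t"
  shows "alg_iso f t fA3 t"
  by (rule iso_par[where lz = "1/D" and lo = "1"]) (simp_all add: assms fA3_def)

lemma T2:
  fixes f :: "int \<Rightarrow> int \<Rightarrow> 'k::field" and t :: int
  assumes Fa: "\<And>a b. f a b = (if even a then (if even b then A else B) else (if even b then C else D))"
  and "D = 0" and "A = 0" and "B = 0" and "C = 0" and "even t"
  shows "alg_iso f t (fA1 0) t"
  by (rule iso_par[where lz = "1" and lo = "1"]) (simp_all add: assms fA1_def)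

lemma T3:
  fixes f :: "int \<Rightarrow> int \<Rightarrow> 'k::field" and t :: int
  assumes Fa: "\<And>a b. f a b = (if even a then (if even b then A else B) else (if even b then C else D))"
  and "D = 0" and "A = 0" and "B = 0" and "C \<noteq> 0" and "even t"
  shows "alg_iso f t (fA1 1) t"
  by (rule iso_par[where lz = "C" and lo = "1"]) (simp_all add: assms fA1_def)

lemma T4:
  fixes f :: "int \<Rightarrow> int \<Rightarrow> 'k::field" and t :: int
  assumes Fa: "\<And>a b. f a b = (if even a then (if even b then A else B) else (if even b then C else D))"
  and "D = 0" and "A = 0" and "B = - C" and "C \<noteq> 0" and "even t"
  shows "alg_iso f t fA2 t"
  by (rule iso_par[where lz = "C" and lo = "1"]) (simp_all add: assms fA2_def)

lemma U1:
  fixes f :: "int \<Rightarrow> int \<Rightarrow> 'k::field" and t :: int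
  assumes Fa: "\<And>a b. f a b = (if even a then (if even b then A else B) else (if even b then C else D))"
  and "D = 0" and "A \<noteq> 0" and "B = 0" and "C = 0" and "odd t"
  shows "alg_iso f t fB3 t"
  by (rule iso_par[where lz = "1" and lo = "1/A"]) (simp_all add: assms fB3_def)

lemma U2:
  fixes f :: "int \<Rightarrow> int \<Rightarrow> 'k::field" and t :: int
  assumes Fa: "\<And>a b. f a b = (if even a then (if even b then A else B) else (if even b then C else D))"
  and "D = 0" and "A = 0" and "B = 0" and "C = 0" and "odd t"
  shows "alg_iso f t (fB1 0) t"
  by (rule iso_par[where lz = "1" and lo = "1"]) (simp_all add: assms fB1_def)

lemma U3:
  fixes f :: "int \<Rightarrow> int \<Rightarrow> 'k::field" and t :: int
  assumes Fa: "\<And>a b. f a b = (if even a then (if even b then A else B) else (if even b then C else D))"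
  and "D = 0" and "A = 0" and "B \<noteq> 0" and "C = 0" and "odd t"
  shows "alg_iso f t (fB1 1) t"
  by (rule iso_par[where lz = "1" and lo = "B"]) (simp_all add: assms fB1_def)

lemma U4:
  fixes f :: "int \<Rightarrow> int \<Rightarrow> 'k::field" and t :: int
  assumes Fa: "\<And>a b. f a b = (if even a then (if even b then A else B) else (if even b then C else D))"
  and "D = 0" and "A = 0" and "B = - C" and "C \<noteq> 0" and "odd t"
  shows "alg_iso f t fA2 t"
  by (rule iso_par[where lz = "1" and lo = "C"]) (simp_all add: assms fA2_def)

theorem mainTheorem8:
  fixes f :: "int \<Rightarrow> int \<Rightarrow> 'k::field" and t :: int
  assumes "periodic2 f" and "is_leibniz f t"
  shows "(even t \<longrightarrow> (\<exists>\<alpha>\<in>{0,1}. alg_iso f t (fA1 \<alpha>) t) \<or> alg_iso f t fA2 t \<or> alg_iso f t fA3 t)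
       \<and> (odd t \<longrightarrow> (\<exists>\<alpha>\<in>{0,1}. alg_iso f t (fB1 \<alpha>) t) \<or> alg_iso f t fA2 t \<or> alg_iso f t fB3 t)"
proof -
  define g :: "bool \<Rightarrow> bool \<Rightarrow> 'k" where "g p q = f (if p then 0 else 1) (if q then 0 else 1)" for p q
  have F: "f a b = g (even a) (even b)" for a b
    using fper[OF assms(1), of a b] by (simp add: g_def)
  define A where "A = g True True"
  define B where "B = g True False"
  define C where "C = g False True"
  define D where "D = g False False"
  have Fa: "f a b = (if even a then (if even b then A else B) else (if even b then C else D))" for a b
    by (simp add: F A_def B_def C_def D_def)
  have L: "\<And>a b c. f b c * f a (b+c+t) = f a b * f (a+b+t) c - f a c * f (a+c+t) b"
    using leib_eq[OF assms(2)] by blast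
  show ?thesis
  proof (intro conjI impI)
    assume te: "even t"
    have e1: "A*A = 0" using L[where a=0 and b=0 and c=0] te by (simp add: Fa)
    have e2: "D*C = 0" using L[where a=1 and b=1 and c=1] te by (simp add: Fa)
    have e3: "B*D = C*D" using L[where a=1 and b=0 and c=1] te e1 by (simp add: Fa)
    have e4: "B*B = A*B - B*C" using L[where a=0 and b=0 and c=1] te by (simp add: Fa)
    have A0: "A = 0" using e1 by simp
    show "(\<exists>\<alpha>\<in>{0,1}. alg_iso f t (fA1 \<alpha>) t) \<or> alg_iso f t fA2 t \<or> alg_iso f t fA3 t"
    proof (cases "D = 0")
      case False
      then have "C = 0" and "B = 0" using e2 e3 by auto
      then show ?thesis using T1[OF Fa False A0 _ _ te] by blast
    next
      case D0: True
      show ?thesis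
      proof (cases "B = 0")
        case B0: True
        show ?thesis
        proof (cases "C = 0")
          case True
          then show ?thesis using T2[OF Fa D0 A0 B0 _ te] by blast
        next
          case False
          then show ?thesis using T3[OF Fa D0 A0 B0 _ te] by blast
        qed
      next
        case False
        have "B * (B + C) = 0" using e4 A0 by (simp add: algebra_simps)
        with False have "B + C = 0" by simp
        then have BC: "B = - C" by (simp add: eq_neg_iff_add_eq_0)
        with False have "C \<noteq> 0" by auto
        then show ?thesis using T4[OF Fa D0 A0 BC _ te] by blast
      qed
    qed
  next
    assume to: "odd t"
    have e1: "D*D = 0" using L[where a=1 and b=1 and c=1] to by (simp add: Fa)
    have D0: "D = 0" using e1 by simp
    have e2: "A*B = 0" using L[where a=0 and b=0 and c=0] to by (simp add: Fa)
    have e3: "C*A = B*A - A*D" using L[where a=0 and b=1 and c=0] to by (simp add: Fa)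
    have e4: "C*C = D*C - C*B" using L[where a=1 and b=1 and c=0] to by (simp add: Fa)
    show "(\<exists>\<alpha>\<in>{0,1}. alg_iso f t (fB1 \<alpha>) t) \<or> alg_iso f t fA2 t \<or> alg_iso f t fB3 t"
    proof (cases "A = 0")
      case False
      then have "B = 0" and "C = 0" using e2 e3 D0 by auto
      then show ?thesis using U1[OF Fa D0 False _ _ to] by blast
    next
      case A0: True
      show ?thesis
      proof (cases "C = 0")
        case C0: True
        show ?thesis
        proof (cases "B = 0")
          case True
          then show ?thesis using U2[OF Fa D0 A0 _ C0 to] by blast
        next
          case False
          then show ?thesis using U3[OF Fa D0 A0 _ C0 to] by blast
        qed
      next
        case False
        have "C * (C + B) = 0" using e4 D0 by (simp add: algebra_simps)
        with False have "B + C = 0" by (simp add: add.commute)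
        then have BC: "B = - C" by (simp add: eq_neg_iff_add_eq_0)
        then show ?thesis using U4[OF Fa D0 A0 BC False to] by blast
      qed
    qed
  qed
qed

end
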